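(* Let $(G,D,\star)$ be a probabilistic metric space (not necessarily complete) where $\star$ is a continuous triangle function, and let $(a_n)\subset G$ be a Cauchy sequence. Then there exists a probabilistic $1$-Lipschitz map $f:G\to\Delta^+$ such that $D(a_n,x)\xrightarrow{w}f(x)$ as $n\to\infty$ for every $x\in G$. In particular $f(a_n)\xrightarrow{w}\mathcal H_0$ as $n\to\infty$.
   Context: A distribution function is a nondecreasing, left-continuous function $F:[-\infty,+\infty]\to[0,1]$ with $F(-\infty)=0$, $F(+\infty)=1$; $\Delta^+$ is the set of distribution functions with $F(0)=0$, ordered pointwise. $\mathcal H_0(t)=0$ for $t\le0$, $1$ for $t>0$. A triangle function is a binary operation $\star$ on $\Delta^+$ that is commutative, associative, nondecreasing in each argument, with $F\star\mathcal H_0=F$. $F_n\xrightarrow{w}F$ (weak convergence) means $F_n(t)\to F(t)$ at every continuity point $t\in\mathbb R$ of $F$; $\star$ is continuous if $F_n\star L_n\xrightarrow{w}F\star L$ whenever $F_n\xrightarrow{w}F$, $L_n\xrightarrow{w}L$. A probabilistic metric space $(G,D,\star)$ consists of a set $G$, a triangle function $\star$ and $D:G\times G\to\Delta^+$ with (i) $D(p,q)=\mathcal H_0$ iff $p=q$; (ii) $D(p,q)=D(q,p)$; (iii) $D(p,q)\star D(q,r)\le D(p,r)$. A sequence $(z_n)\subset G$ is Cauchy if $D(z_n,z_p)(t)\to\mathcal H_0(t)$ for all $t\in\mathbb R$ as $n,p\to\infty$. A map $f:G\to\Delta^+$ is probabilistic $1$-Lipschitz if $D(x,y)\star f(y)\le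 f(x)$ for all $x,y$. *)

theory Defs
  imports "HOL-Analysis.Analysis"
begin

definition distribution_function :: "(ereal \<Rightarrow> real) \<Rightarrow> bool" where
  "distribution_function F \<longleftrightarrow>
     (\<forall>t. 0 \<le> F t \<and> F t \<le> 1) \<and> mono F \<and>
     (\<forall>t::real. ((\<lambda>x::real. F (ereal x)) \<longlongrightarrow> F (ereal t)) (at_left t)) \<and>
     F (-\<infinity>) = 0 \<and> F \<infinity> = 1"

definition DeltaPlus :: "(ereal \<Rightarrow> real) set" where
  "DeltaPlus = {F. distribution_function F \<and> F 0 = 0}"

definition H0 :: "ereal \<Rightarrow> real" where
  "H0 t = (if t \<le> 0 then 0 else 1)"

definition triangle_function :: "((ereal \<Rightarrow> real) \<Rightarrow> (ereal \<Rightarrow> real) \<Rightarrow> (ereal \<Rightarrow> real)) \<Rightarrow> bool" where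
  "triangle_function T \<longleftrightarrow>
     (\<forall>F\<in>DeltaPlus. \<forall>L\<in>DeltaPlus. T F L \<in> DeltaPlus) \<and>
     (\<forall>F\<in>DeltaPlus. \<forall>L\<in>DeltaPlus. T F L = T L F) \<and>
     (\<forall>F\<in>DeltaPlus. \<forall>L\<in>DeltaPlus. \<forall>M\<in>DeltaPlus. T (T F L) M = T F (T L M)) \<and>
     (\<forall>F\<in>DeltaPlus. \<forall>F'\<in>DeltaPlus. \<forall>L\<in>DeltaPlus. F \<le> F' \<longrightarrow> T F L \<le> T F' L) \<and>
     (\<forall>F\<in>DeltaPlus. T F H0 = F)"

definition weak_conv :: "(nat \<Rightarrow> ereal \<Rightarrow> real) \<Rightarrow> (ereal \<Rightarrow> real) \<Rightarrow> bool" where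
  "weak_conv Fs F \<longleftrightarrow>
     (\<forall>t::real. isCont (\<lambda>x::real. F (ereal x)) t \<longrightarrow> (\<lambda>n. Fs n (ereal t)) \<longlonglongrightarrow> F (ereal t))"

definition continuous_triangle_function :: "((ereal \<Rightarrow> real) \<Rightarrow> (ereal \<Rightarrow> real) \<Rightarrow> (ereal \<Rightarrow> real)) \<Rightarrow> bool" where
  "continuous_triangle_function T \<longleftrightarrow> triangle_function T \<and>
     (\<forall>Fs Ls F L. (\<forall>n. Fs n \<in> DeltaPlus) \<longrightarrow> (\<forall>n. Ls n \<in> DeltaPlus) \<longrightarrow>
        F \<in> DeltaPlus \<longrightarrow> L \<in> DeltaPlus \<longrightarrow> weak_conv Fs F \<longrightarrow> weak_conv Ls L \<longrightarrow>
        weak_conv (\<lambda>n. T (Fs n) (Ls n)) (T F L))"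

definition PM_space :: "('a \<Rightarrow> 'a \<Rightarrow> (ereal \<Rightarrow> real)) \<Rightarrow> ((ereal \<Rightarrow> real) \<Rightarrow> (ereal \<Rightarrow> real) \<Rightarrow> (ereal \<Rightarrow> real)) \<Rightarrow> bool" where
  "PM_space D T \<longleftrightarrow> triangle_function T \<and>
     (\<forall>p q. D p q \<in> DeltaPlus) \<and>
     (\<forall>p q. D p q = H0 \<longleftrightarrow> p = q) \<and>
     (\<forall>p q. D p q = D q p) \<and>
     (\<forall>p q r. T (D p q) (D q r) \<le> D p r)"

definition PM_Cauchy :: "('a \<Rightarrow> 'a \<Rightarrow> (ereal \<Rightarrow> real)) \<Rightarrow> (nat \<Rightarrow> 'a) \<Rightarrow> bool" where
  "PM_Cauchy D z \<longleftrightarrow>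
     (\<forall>t::real. \<forall>e>0. \<exists>N. \<forall>n\<ge>N. \<forall>p\<ge>N. \<bar>D (z n) (z p) (ereal t) - H0 (ereal t)\<bar> < e)"

definition prob_1_Lipschitz :: "('a \<Rightarrow> 'a \<Rightarrow> (ereal \<Rightarrow> real)) \<Rightarrow> ((ereal \<Rightarrow> real) \<Rightarrow> (ereal \<Rightarrow> real) \<Rightarrow> (ereal \<Rightarrow> real)) \<Rightarrow> ('a \<Rightarrow> (ereal \<Rightarrow> real)) \<Rightarrow> bool" where
  "prob_1_Lipschitz D T f \<longleftrightarrow> (\<forall>x. f x \<in> DeltaPlus) \<and> (\<forall>x y. T (D x y) (f y) \<le> f x)"

end

theory Submission imports Defs "HOL-Probability.Helly_Selection" begin

hide_const (open) Weak_Convergence.weak_conv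

lemma DP_props:
  assumes "F \<in> DeltaPlus"
  shows "0 \<le> F t" "F t \<le> 1" "mono F" "F (-\<infinity>) = 0" "F \<infinity> = 1" "F 0 = 0"
    "((\<lambda>x::real. F (ereal x)) \<longlongrightarrow> F (ereal r)) (at_left r)"
  using assms unfolding DeltaPlus_def distribution_function_def by auto

lemma DP_nonpos:
  assumes "F \<in> DeltaPlus" "t \<le> 0"
  shows "F t = 0"
  using DP_props[OF assms(1)] assms(2) by (metis antisym monoD)

lemma DP_mono_real:
  assumes "F \<in> DeltaPlus"
  shows "mono (\<lambda>x::real. F (ereal x))"
  using DP_props(3)[OF assms] by (auto simp: mono_def)

lemma cont_dense:
  fixes g h :: "real \<Rightarrow> real"
  assumes "mono g" "mono h" "a < b"
  shows "\<exists>u. a < u \<and> u < b \<and> isCont g u \<and> isCont h u"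
proof -
  have "countable ({x. \<not> isCont g x} \<union> {x. \<not> isCont h x})"
    using mono_ctble_discont[OF assms(1)] mono_ctble_discont[OF assms(2)] by auto
  from open_minus_countable[OF this, of "{a<..<b}"] assms(3)
  show ?thesis by auto
qed

lemma DP_le:
  assumes L1: "L1 \<in> DeltaPlus" and L2: "L2 \<in> DeltaPlus"
    and H: "\<And>t. isCont (\<lambda>x::real. L1 (ereal x)) t \<Longrightarrow> isCont (\<lambda>x::real. L2 (ereal x)) t
             \<Longrightarrow> L1 (ereal t) \<le> L2 (ereal t)"
  shows "L1 \<le> L2"
proof (rule le_funI)
  fix t :: ereal
  show "L1 t \<le> L2 t"
  proof (cases t)
    case (real r)
    show ?thesis
    proof (rule ccontr)
      assume "\<not> L1 t \<le> L2 t"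
      hence lt: "L2 (ereal r) < L1 (ereal r)" using real by simp
      have "\<forall>\<^sub>F x in at_left r. L2 (ereal r) < L1 (ereal x)"
        using order_tendstoD(1)[OF DP_props(7)[OF L1] lt] .
      then obtain b where b: "b < r" "\<And>y. b < y \<Longrightarrow> y < r \<Longrightarrow> L2 (ereal r) < L1 (ereal y)"
        using eventually_at_left[of "r - 1" r] by auto
      obtain u where u: "b < u" "u < r" "isCont (\<lambda>x::real. L1 (ereal x)) u"
        "isCont (\<lambda>x::real. L2 (ereal x)) u"
        using cont_dense[OF DP_mono_real[OF L1] DP_mono_real[OF L2] b(1)] by auto
      have "L1 (ereal u) \<le> L2 (ereal u)" using H u by auto
      also have "\<dots> \<le> L2 (ereal r)" using DP_mono_real[OF L2] u(2) by (auto simp: mono_def)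
      also have "\<dots> < L1 (ereal u)" using b u by auto
      finally show False by simp
    qed
  next
    case PInf thus ?thesis using DP_props[OF L1] DP_props[OF L2] by simp
  next
    case MInf thus ?thesis using DP_props[OF L1] DP_props[OF L2] by simp
  qed
qed

lemma weak_le:
  fixes A B :: "nat \<Rightarrow> ereal \<Rightarrow> real"
  assumes "weak_conv A L1" "weak_conv B L2" "\<And>n. A n \<le> B n" "L1 \<in> DeltaPlus" "L2 \<in> DeltaPlus"
  shows "L1 \<le> L2"
proof (rule DP_le[OF assms(4,5)])
  fix t assume "isCont (\<lambda>x::real. L1 (ereal x)) t" "isCont (\<lambda>x::real. L2 (ereal x)) t"
  hence "(\<lambda>n. A n (ereal t)) \<longlonglongrightarrow> L1 (ereal t)" "(\<lambda>n. B n (ereal t)) \<longlonglongrightarrow> L2 (ereal t)"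
    using assms(1,2) unfolding Defs.weak_conv_def by auto
  thus "L1 (ereal t) \<le> L2 (ereal t)"
    by (rule LIMSEQ_le) (use assms(3) in \<open>auto simp: le_fun_def\<close>)
qed

lemma H0_DP: "H0 \<in> DeltaPlus"
proof -
  have "((\<lambda>x::real. H0 (ereal x)) \<longlongrightarrow> H0 (ereal t)) (at_left t)" for t :: real
  proof (cases "t \<le> 0")
    case True
    have "\<forall>\<^sub>F x in at_left t. H0 (ereal x) = H0 (ereal t)"
      using True unfolding eventually_at_left[of "t - 1" t, simplified]
      by (intro exI[of _ "t - 1"]) (auto simp: H0_def)
    thus ?thesis by (rule tendsto_eventually)
  next
    case False
    have "\<forall>\<^sub>F x in at_left t. H0 (ereal x) = H0 (ereal t)"
      proof -
      have "0 < t" using False by simp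
      show ?thesis unfolding eventually_at_left[OF \<open>0 < t\<close>]
        by (intro exI[of _ "0"]) (auto simp: H0_def \<open>0 < t\<close>)
    qed
    thus ?thesis by (rule tendsto_eventually)
  qed
  moreover have "mono H0" by (auto simp: mono_def H0_def)
  ultimately show ?thesis
    unfolding DeltaPlus_def distribution_function_def by (auto simp: H0_def)
qed

lemma subseq_principle:
  fixes X :: "nat \<Rightarrow> real"
  assumes "\<And>r::nat\<Rightarrow>nat. strict_mono r \<Longrightarrow> \<exists>r'::nat\<Rightarrow>nat. strict_mono r' \<and> (\<lambda>n. X (r (r' n))) \<longlonglongrightarrow> l"
  shows "X \<longlonglongrightarrow> l"
proof (rule ccontr)
  assume "\<not> X \<longlonglongrightarrow> l"
  then obtain e where e: "e > 0" "\<not> (\<forall>\<^sub>F n in sequentially. dist (X n) l < e)"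
    unfolding tendsto_iff by auto
  define S where "S = {n. e \<le> dist (X n) l}"
  have "infinite S"
  proof
    assume "finite S"
    then obtain N where "S \<subseteq> {..<N}" using finite_nat_bounded by blast
    hence "\<forall>n\<ge>N. dist (X n) l < e" unfolding S_def by (auto simp: not_le[symmetric])
    thus False using e(2) unfolding eventually_sequentially by auto
  qed
  define r where "r = enumerate S"
  have r: "strict_mono r" "\<And>n. r n \<in> S"
    using \<open>infinite S\<close> by (auto simp: r_def strict_mono_enumerate enumerate_in_set)
  obtain r' where r': "strict_mono r'" "(\<lambda>n. X (r (r' n))) \<longlonglongrightarrow> l" using assms[OF r(1)] by blast
  then obtain N where "\<forall>n\<ge>N. dist (X (r (r' n))) l < e"
    using e(1) unfolding tendsto_iff eventually_sequentially by blast
  moreover have "e \<le> dist (X (r (r' N))) l" using r(2) by (auto simp: S_def)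
  ultimately show False by auto
qed


lemma DP_compact:
  fixes Fs :: "nat \<Rightarrow> ereal \<Rightarrow> real"
  assumes Fs: "\<And>n. Fs n \<in> DeltaPlus"
  shows "\<exists>s L. strict_mono s \<and> L \<in> DeltaPlus \<and> weak_conv (\<lambda>n. Fs (s n)) L"
proof -
  define g where "g n x = - Fs n (ereal (- x))" for n x
  have rc: "continuous (at_right x) (g n)" for n x
  proof -
    have "((\<lambda>y. Fs n (ereal y)) \<longlongrightarrow> Fs n (ereal (-x))) (at_left (-x))" by (rule DP_props(7)[OF Fs])
    hence "((\<lambda>y. Fs n (ereal (- y))) \<longlongrightarrow> Fs n (ereal (-x))) (at_right x)"
      unfolding filterlim_at_left_to_right by simp
    hence "(g n \<longlongrightarrow> g n x) (at_right x)" unfolding g_def by (intro tendsto_minus)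
    thus ?thesis by (simp add: continuous_within)
  qed
  have mg: "mono (g n)" for n
  proof (rule monoI)
    fix x y :: real assume "x \<le> y"
    thus "g n x \<le> g n y" using DP_mono_real[OF Fs, of n] unfolding g_def mono_def by auto
  qed
  have bdd: "\<bar>g n x\<bar> \<le> 1" for n x using DP_props(1,2)[OF Fs, of n] by (auto simp: g_def)
  obtain s G where s: "strict_mono s" and Grc: "\<And>x. continuous (at_right x) G" and Gm: "mono G"
    and Gb: "\<And>x. \<bar>G x\<bar> \<le> 1" and Glim: "\<And>x. isCont G x \<Longrightarrow> (\<lambda>n. g (s n) x) \<longlonglongrightarrow> G x"
    using Helly_selection[of g 1, OF rc mg bdd] by blast
  have Gle0: "G x \<le> 0" for x
  proof -
    obtain y where y: "x < y" "isCont G y" using cont_dense[OF Gm Gm, of x "x+1"] by auto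
    have "G x \<le> G y" using y Gm by (auto simp: mono_def)
    also have "G y \<le> 0"
      by (rule LIMSEQ_le_const2[OF Glim[OF y(2)]]) (use DP_props(1)[OF Fs] in \<open>auto simp: g_def\<close>)
    finally show ?thesis .
  qed
  define L where "L t = (case t of ereal r \<Rightarrow> (if r \<le> 0 then 0 else - G (- r)) | PInfty \<Rightarrow> 1 | MInfty \<Rightarrow> 0)" for t
  have Lr: "L (ereal r) = (if r \<le> 0 then 0 else - G (-r))" and Linf: "L \<infinity> = 1" "L (-\<infinity>) = 0" for r
    by (simp_all add: L_def)
  have Lb: "0 \<le> L t \<and> L t \<le> 1" for t
    using Gle0 Gb by (cases t) (auto simp: Lr Linf abs_le_iff)
  have mL: "mono L"
  proof (rule monoI)
    fix x y :: ereal assume xy: "x \<le> y"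
    show "L x \<le> L y"
    proof (cases x)
      case (real r) note x = this
      show ?thesis
      proof (cases y)
        case (real q)
        have "G (-q) \<le> G (-r)" using monoD[OF Gm, of "-q" "-r"] xy x real by simp
        thus ?thesis using x real xy Gle0[of "-q"] by (auto simp: Lr)
      qed (use xy x Lb Linf in auto)
    qed (use xy Lb Linf in auto)
  qed
  have Llc: "((\<lambda>x::real. L (ereal x)) \<longlongrightarrow> L (ereal r)) (at_left r)" for r
  proof (cases "r \<le> 0")
    case True
    have "\<forall>\<^sub>F x in at_left r. L (ereal x) = L (ereal r)"
      using True unfolding eventually_at_left[of "r - 1" r, simplified]
      by (intro exI[of _ "r - 1"]) (auto simp: Lr)
    thus ?thesis by (rule tendsto_eventually)
  next
    case False
    hence r0: "0 < r" by simp
    have ev: "\<forall>\<^sub>F x in at_left r. - G (- x) = L (ereal x)"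
      unfolding eventually_at_left[OF r0]
      by (intro exI[of _ "0"]) (auto simp: Lr r0)
    have "(G \<longlongrightarrow> G (-r)) (at_right (-r))" using Grc[of "-r"] by (simp add: continuous_within)
    hence "((\<lambda>x. G (- x)) \<longlongrightarrow> G (-r)) (at_left r)"
      unfolding filterlim_at_left_to_right by simp
    hence "((\<lambda>x. - G (- x)) \<longlongrightarrow> - G (-r)) (at_left r)" by (intro tendsto_minus)
    hence "((\<lambda>x. L (ereal x)) \<longlongrightarrow> - G (-r)) (at_left r)" using tendsto_cong[OF ev] by blast
    thus ?thesis using r0 by (simp add: Lr)
  qed
  have LDP: "L \<in> DeltaPlus"
    unfolding DeltaPlus_def distribution_function_def
    using Lb mL Llc Linf by (auto simp: zero_ereal_def Lr)
  have wc: "weak_conv (\<lambda>n. Fs (s n)) L"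
    unfolding Defs.weak_conv_def
  proof (intro allI impI)
    fix t :: real assume ct: "isCont (\<lambda>x::real. L (ereal x)) t"
    show "(\<lambda>n. Fs (s n) (ereal t)) \<longlonglongrightarrow> L (ereal t)"
    proof (cases "t \<le> 0")
      case True
      have "Fs (s n) (ereal t) = 0" for n using DP_nonpos[OF Fs] True by (simp add: zero_ereal_def)
      thus ?thesis using True by (simp add: Lr)
    next
      case False
      hence t0: "0 < t" by simp
      have "isCont (\<lambda>y. - L (ereal (- y))) (-t)"
        using isCont_o2[where f=uminus and a="-t" and g="\<lambda>x. L (ereal x)"] ct by (intro isCont_minus) simp
      moreover have "\<forall>\<^sub>F y in nhds (-t). - L (ereal (- y)) = G y"
        using eventually_nhds_in_open[of "{..<0}" "-t"] t0
        by (auto elim!: eventually_mono simp: Lr)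
      ultimately have "isCont G (-t)" using isCont_cong by metis
      from Glim[OF this] have "(\<lambda>n. - g (s n) (-t)) \<longlonglongrightarrow> - G (-t)" by (intro tendsto_minus)
      thus ?thesis using t0 by (simp add: g_def Lr)
    qed
  qed
  show ?thesis using s LDP wc by blast
qed


lemma weak_conv_const: "weak_conv (\<lambda>n. F) F"
  unfolding Defs.weak_conv_def by simp

theorem mainTheorem9:
  fixes D :: "'a \<Rightarrow> 'a \<Rightarrow> (ereal \<Rightarrow> real)"
    and T :: "(ereal \<Rightarrow> real) \<Rightarrow> (ereal \<Rightarrow> real) \<Rightarrow> (ereal \<Rightarrow> real)"
    and a :: "nat \<Rightarrow> 'a"
  assumes "PM_space D T"
    and "continuous_triangle_function T"
    and "PM_Cauchy D a"
  shows "\<exists>f. prob_1_Lipschitz D T f \<and>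
             (\<forall>x. weak_conv (\<lambda>n. D (a n) x) (f x)) \<and>
             weak_conv (\<lambda>n. f (a n)) H0"
proof -
  have DDP: "\<And>p q. D p q \<in> DeltaPlus" and Dsym: "\<And>p q. D p q = D q p"
    and Dtri: "\<And>p q r. T (D p q) (D q r) \<le> D p r"
    using assms(1) unfolding PM_space_def by auto
  have Tcomm: "\<And>F L. F \<in> DeltaPlus \<Longrightarrow> L \<in> DeltaPlus \<Longrightarrow> T F L = T L F"
    and TH0: "\<And>F. F \<in> DeltaPlus \<Longrightarrow> T F H0 = F"
    and TDP: "\<And>F L. F \<in> DeltaPlus \<Longrightarrow> L \<in> DeltaPlus \<Longrightarrow> T F L \<in> DeltaPlus"
    using assms(1) unfolding PM_space_def triangle_function_def by auto
  have Tcont: "\<And>Fs Ls F L. (\<And>n. Fs n \<in> DeltaPlus) \<Longrightarrow> (\<And>n. Ls n \<in> DeltaPlus) \<Longrightarrow>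
        F \<in> DeltaPlus \<Longrightarrow> L \<in> DeltaPlus \<Longrightarrow> weak_conv Fs F \<Longrightarrow> weak_conv Ls L \<Longrightarrow>
        weak_conv (\<lambda>n. T (Fs n) (Ls n)) (T F L)"
  proof -
    fix Fs Ls F L
    assume "\<And>n. Fs n \<in> DeltaPlus" "\<And>n. Ls n \<in> DeltaPlus" "F \<in> DeltaPlus" "L \<in> DeltaPlus"
      "weak_conv Fs F" "weak_conv Ls L"
    with assms(2) show "weak_conv (\<lambda>n. T (Fs n) (Ls n)) (T F L)"
      unfolding continuous_triangle_function_def by simp
  qed
  have Cau: "\<And>t e. e > 0 \<Longrightarrow> \<exists>N. \<forall>n\<ge>N. \<forall>p\<ge>N. \<bar>D (a n) (a p) (ereal t) - H0 (ereal t)\<bar> < e"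
    using assms(3) unfolding PM_Cauchy_def by blast
  have key: "L2 \<le> L1" if p: "strict_mono p" and q: "strict_mono q"
    and w1: "weak_conv (\<lambda>n. D (a (p n)) x) L1" and w2: "weak_conv (\<lambda>n. D (a (q n)) x) L2"
    and L1: "L1 \<in> DeltaPlus" and L2: "L2 \<in> DeltaPlus" for p q x L1 L2
  proof -
    have wH: "weak_conv (\<lambda>n. D (a (p n)) (a (q n))) H0"
      unfolding Defs.weak_conv_def
    proof (intro allI impI)
      fix t :: real
      show "(\<lambda>n. D (a (p n)) (a (q n)) (ereal t)) \<longlonglongrightarrow> H0 (ereal t)"
        unfolding LIMSEQ_iff real_norm_def
      proof (intro allI impI)
        fix e :: real assume "e > 0"
        then obtain N where N: "\<forall>n\<ge>N. \<forall>p\<ge>N. \<bar>D (a n) (a p) (ereal t) - H0 (ereal t)\<bar> < e"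
          using Cau by blast
        have "\<forall>n\<ge>N. \<bar>D (a (p n)) (a (q n)) (ereal t) - H0 (ereal t)\<bar> < e"
        proof (intro allI impI)
          fix n assume "N \<le> n"
          moreover have "n \<le> p n" "n \<le> q n" using seq_suble[OF p] seq_suble[OF q] by auto
          ultimately show "\<bar>D (a (p n)) (a (q n)) (ereal t) - H0 (ereal t)\<bar> < e" using N by auto
        qed
        thus "\<exists>no. \<forall>n\<ge>no. \<bar>D (a (p n)) (a (q n)) (ereal t) - H0 (ereal t)\<bar> < e" by blast
      qed
    qed
    have "weak_conv (\<lambda>n. T (D (a (p n)) (a (q n))) (D (a (q n)) x)) (T H0 L2)"
      by (rule Tcont[OF DDP DDP H0_DP L2 wH w2])
    moreover have "T H0 L2 = L2" using Tcomm[OF H0_DP L2] TH0[OF L2] by simp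
    ultimately have "weak_conv (\<lambda>n. T (D (a (p n)) (a (q n))) (D (a (q n)) x)) L2" by simp
    from weak_le[OF this w1 Dtri L2 L1] show ?thesis .
  qed
  have ex: "\<exists>L. L \<in> DeltaPlus \<and> weak_conv (\<lambda>n. D (a n) x) L" for x
  proof -
    obtain s L where s: "strict_mono s" and L: "L \<in> DeltaPlus" and wL: "weak_conv (\<lambda>n. D (a (s n)) x) L"
      using DP_compact[of "\<lambda>n. D (a n) x", OF DDP] by blast
    have "weak_conv (\<lambda>n. D (a n) x) L"
      unfolding Defs.weak_conv_def
    proof (intro allI impI)
      fix t :: real assume ct: "isCont (\<lambda>y::real. L (ereal y)) t"
      show "(\<lambda>n. D (a n) x (ereal t)) \<longlonglongrightarrow> L (ereal t)"
      proof (rule subseq_principle)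
        fix r :: "nat \<Rightarrow> nat" assume r: "strict_mono r"
        obtain r' L' where r': "strict_mono r'" and L': "L' \<in> DeltaPlus"
          and wL': "weak_conv (\<lambda>n. D (a (r (r' n))) x) L'"
          using DP_compact[of "\<lambda>n. D (a (r n)) x", OF DDP] by blast
        have rr: "strict_mono (\<lambda>n. r (r' n))" using r r' by (simp add: strict_mono_def)
        have "L' \<le> L" using key[OF s rr wL wL' L L'] .
        moreover have "L \<le> L'" using key[OF rr s wL' wL L' L] .
        ultimately have "L' = L" by (rule order.antisym)
        thus "\<exists>r'. strict_mono r' \<and> (\<lambda>n. D (a (r (r' n))) x (ereal t)) \<longlonglongrightarrow> L (ereal t)"
          using r' wL' ct unfolding Defs.weak_conv_def by blast
      qed
    qed
    thus ?thesis using L by blast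
  qed
  define f where "f x = (SOME L. L \<in> DeltaPlus \<and> weak_conv (\<lambda>n. D (a n) x) L)" for x
  have fDP: "f x \<in> DeltaPlus" and fw: "weak_conv (\<lambda>n. D (a n) x) (f x)" for x
    using someI_ex[OF ex[of x]] unfolding f_def by blast+
  have lip: "T (D x y) (f y) \<le> f x" for x y
  proof -
    have w: "weak_conv (\<lambda>n. T (D x y) (D (a n) y)) (T (D x y) (f y))"
      by (rule Tcont[OF DDP DDP DDP fDP weak_conv_const fw])
    have le: "T (D x y) (D (a n) y) \<le> D (a n) x" for n
      using Dtri[of "a n" y x] Tcomm[OF DDP DDP, of x y "a n" y] Dsym[of x y] by simp
    show ?thesis using weak_le[OF w fw[of x] le TDP[OF DDP fDP] fDP[of x]] .
  qed
  have last: "weak_conv (\<lambda>n. f (a n)) H0"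
    unfolding Defs.weak_conv_def
  proof (intro allI impI)
    fix t :: real
    show "(\<lambda>n. f (a n) (ereal t)) \<longlonglongrightarrow> H0 (ereal t)"
    proof (cases "t \<le> 0")
      case True
      have "f (a n) (ereal t) = 0" for n using DP_nonpos[OF fDP] True by (simp add: zero_ereal_def)
      thus ?thesis using True by (simp add: H0_def zero_ereal_def)
    next
      case False
      hence t0: "0 < t" by simp
      have H1: "H0 (ereal s) = 1" if "0 < s" for s using that by (simp add: H0_def zero_ereal_def)
      show ?thesis
        unfolding LIMSEQ_iff real_norm_def H1[OF t0]
      proof (intro allI impI)
        fix e :: real assume e: "e > 0"
        then obtain N where N: "\<forall>n\<ge>N. \<forall>p\<ge>N. \<bar>D (a n) (a p) (ereal (t/2)) - H0 (ereal (t/2))\<bar> < e/2"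
          using Cau[of "e/2" "t/2"] by auto
        have "\<bar>f (a n) (ereal t) - 1\<bar> < e" if n: "N \<le> n" for n
        proof -
          obtain u where u: "t/2 < u" "u < t" "isCont (\<lambda>y. f (a n) (ereal y)) u"
            using cont_dense[OF DP_mono_real[OF fDP] DP_mono_real[OF fDP], of "t/2" t "a n" "a n"] t0 by auto
          have lim: "(\<lambda>m. D (a m) (a n) (ereal u)) \<longlonglongrightarrow> f (a n) (ereal u)"
            using fw[of "a n"] u(3) unfolding Defs.weak_conv_def by blast
          have "\<forall>m\<ge>N. 1 - e/2 \<le> D (a m) (a n) (ereal u)"
          proof (intro allI impI)
            fix m assume "N \<le> m"
            hence "\<bar>D (a m) (a n) (ereal (t/2)) - 1\<bar> < e/2" using N n H1[of "t/2"] t0 by auto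
            moreover have "D (a m) (a n) (ereal (t/2)) \<le> D (a m) (a n) (ereal u)"
              using DP_mono_real[OF DDP] u(1) by (auto simp: mono_def)
            ultimately show "1 - e/2 \<le> D (a m) (a n) (ereal u)" by linarith
          qed
          hence "1 - e/2 \<le> f (a n) (ereal u)" using LIMSEQ_le_const[OF lim] by blast
          moreover have "f (a n) (ereal u) \<le> f (a n) (ereal t)"
            using DP_mono_real[OF fDP] u(2) by (auto simp: mono_def)
          moreover have "f (a n) (ereal t) \<le> 1" using DP_props(2)[OF fDP] .
          ultimately show ?thesis using e by linarith
        qed
        thus "\<exists>no. \<forall>n\<ge>no. \<bar>f (a n) (ereal t) - 1\<bar> < e" by blast
      qed
    qed
  qed
  show ?thesis
    unfolding prob_1_Lipschitz_def using fDP lip fw last by blast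
qed

end
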